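(* Let $(x_i(t),v_i(t))_{i=1}^N$ follow the sticky particle Cucker–Smale dynamics, and let $\psi_i(t):=v_i(t)+\sum_{j=1}^N m_j\,\omega(x_i(t)-x_j(t))$. Fix $i\in\{1,\dots,N\}$ and a time $t>0$, and set $i_*(t):=\min J_i(t)$, $i^*(t):=\max J_i(t)$. Then for every $k\in J_i(t)$, $$\frac{\sum_{j=i_*(t)}^{k}m_j\psi_j(t-)}{\sum_{j=i_*(t)}^{k}m_j}\;\ge\;\frac{\sum_{j\in J_i(t)}m_j\psi_j(t-)}{\sum_{j\in J_i(t)}m_j}=\psi_i(t+)\;\ge\;\frac{\sum_{j=k}^{i^*(t)}m_j\psi_j(t-)}{\sum_{j=k}^{i^*(t)}m_j}.$$
   Context: Standing assumption (H): $\omega:\mathbb{R}\to[0,+\infty)$, $\omega\in W^{1,1}(\mathbb{R})\cap W^{1,\infty}(\mathbb{R})$, $\int_{\mathbb{R}}\omega\,dx=1$, and $\phi:=\omega'\in L^1(\mathbb{R})\cap L^\infty(\mathbb{R})$. Sticky particle Cucker–Smale dynamics: given $N\in\mathbb{N}$, masses $m_1,\dots,m_N>0$ with $\sum_i m_i=1$, initial positions $x_1^0\le\dots\le x_N^0$ and initial velocities $v_1^0,\dots,v_N^0$, the trajectories $(x_i(t),v_i(t))$, $t\ge0$, have continuous positions with $x_1(t)\le\dots\le x_N(t)$. Let $J_i(t):=\{j\in\{1,\dots,N\}: x_j(t)=x_i(t)\}$; particles that meet stick together, i.e. $J_i(t)\subseteq J_i(s)$ for $0\le t\le s$. A collision time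 is a time at which two or more particles that were apart come to have the same position for the first time. At times $t$ that are not collision times, $\dot x_i=v_i$ and $\dot v_i=\sum_{j=1}^N m_j\phi(x_i-x_j)(v_j-v_i)$. At a collision time $t$, the particles in $J_i(t)$ continue with the common velocity $v_i(t+)=\frac{\sum_{j\in J_i(t)}m_jv_j(t-)}{\sum_{j\in J_i(t)}m_j}$. *)

theory Defs
  imports "HOL-Analysis.Analysis"
begin

text \<open>W^{1,1} and W^{1,infinity} are rendered as: omega and phi Lebesgue integrable,
  omega bounded, phi essentially bounded, and phi is the (weak = a.e.) derivative
  of omega in the absolutely continuous sense.\<close>
definition hyp_H :: "(real \<Rightarrow> real) \<Rightarrow> (real \<Rightarrow> real) \<Rightarrow> bool" where
  "hyp_H \<omega> \<phi> \<longleftrightarrow>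
     (\<forall>x. 0 \<le> \<omega> x) \<and>
     integrable lborel \<omega> \<and> (\<exists>C. \<forall>x. \<bar>\<omega> x\<bar> \<le> C) \<and>
     integrable lborel \<phi> \<and> (\<exists>C. AE x in lborel. \<bar>\<phi> x\<bar> \<le> C) \<and>
     (\<forall>a b. a \<le> b \<longrightarrow> \<omega> b - \<omega> a = set_lebesgue_integral lborel {a..b} \<phi>) \<and>
     integral\<^sup>L lborel \<omega> = 1"

definition cluster :: "nat \<Rightarrow> (nat \<Rightarrow> real \<Rightarrow> real) \<Rightarrow> nat \<Rightarrow> real \<Rightarrow> nat set" where
  "cluster N x i t = {j \<in> {1..N}. x j t = x i t}"

definition collision_time :: "nat \<Rightarrow> (nat \<Rightarrow> real \<Rightarrow> real) \<Rightarrow> real \<Rightarrow> bool" where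
  "collision_time N x t \<longleftrightarrow> 0 < t \<and>
     (\<exists>i\<in>{1..N}. \<exists>j\<in>{1..N}. x i t = x j t \<and> (\<forall>s\<in>{0..<t}. x i s \<noteq> x j s))"

definition cs_force :: "nat \<Rightarrow> (nat \<Rightarrow> real) \<Rightarrow> (real \<Rightarrow> real) \<Rightarrow>
    (nat \<Rightarrow> real \<Rightarrow> real) \<Rightarrow> (nat \<Rightarrow> real \<Rightarrow> real) \<Rightarrow> nat \<Rightarrow> real \<Rightarrow> real" where
  "cs_force N m \<phi> x v i t = (\<Sum>j=1..N. m j * \<phi> (x i t - x j t) * (v j t - v i t))"

definition sticky_CS :: "nat \<Rightarrow> (nat \<Rightarrow> real) \<Rightarrow> (real \<Rightarrow> real) \<Rightarrow>
    (nat \<Rightarrow> real \<Rightarrow> real) \<Rightarrow> (nat \<Rightarrow> real \<Rightarrow> real) \<Rightarrow> bool" where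
  "sticky_CS N m \<phi> x v \<longleftrightarrow>
     (\<forall>i\<in>{1..N}. 0 < m i) \<and> (\<Sum>i=1..N. m i) = 1 \<and>
     (\<forall>i\<in>{1..N}. continuous_on {0..} (x i)) \<and>
     (\<forall>t\<ge>0. \<forall>i\<in>{1..N}. \<forall>j\<in>{1..N}. i \<le> j \<longrightarrow> x i t \<le> x j t) \<and>
     (\<forall>i\<in>{1..N}. \<forall>t s. 0 \<le> t \<longrightarrow> t \<le> s \<longrightarrow> cluster N x i t \<subseteq> cluster N x i s) \<and>
     (\<forall>t\<ge>0. \<not> collision_time N x t \<longrightarrow>
        (\<forall>i\<in>{1..N}. (x i has_real_derivative v i t) (at t within {0..}) \<and>
                     (v i has_real_derivative cs_force N m \<phi> x v i t) (at t within {0..}))) \<and>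
     (\<forall>t. collision_time N x t \<longrightarrow>
        (\<forall>i\<in>{1..N}. (\<exists>l. (v i \<longlongrightarrow> l) (at_left t)) \<and>
           (v i \<longlongrightarrow> (\<Sum>j\<in>cluster N x i t. m j * Lim (at_left t) (v j))
                          / (\<Sum>j\<in>cluster N x i t. m j)) (at_right t)))"

definition psi :: "nat \<Rightarrow> (nat \<Rightarrow> real) \<Rightarrow> (real \<Rightarrow> real) \<Rightarrow>
    (nat \<Rightarrow> real \<Rightarrow> real) \<Rightarrow> (nat \<Rightarrow> real \<Rightarrow> real) \<Rightarrow> nat \<Rightarrow> real \<Rightarrow> real" where
  "psi N m \<omega> x v i t = v i t + (\<Sum>j=1..N. m j * \<omega> (x i t - x j t))"

end

theory Submission
  imports Defs
begin
lemma coll_finite: "finite {\<tau>. collision_time N x \<tau>}"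
proof -
  define S where "S p = {\<tau>. x (fst p) \<tau> = x (snd p) \<tau> \<and> (\<forall>s\<in>{0..<\<tau>}. x (fst p) s \<noteq> x (snd p) s) \<and> 0 < \<tau>}" for p
  have fin: "finite (S p)" for p
  proof (cases "S p = {}")
    case False
    then obtain a where a: "a \<in> S p" by auto
    have "S p \<subseteq> {a}"
    proof
      fix b assume b: "b \<in> S p"
      show "b \<in> {a}"
      proof (rule ccontr)
        assume "b \<notin> {a}"
        then have "a < b \<or> b < a" by auto
        then show False using a b unfolding S_def by force
      qed
    qed
    then show ?thesis using finite_subset by blast
  qed simp
  have "{\<tau>. collision_time N x \<tau>} \<subseteq> (\<Union>p\<in>{1..N}\<times>{1..N}. S p)"
    unfolding collision_time_def S_def by force
  then show ?thesis using fin by (meson finite_SigmaI finite_UN_I finite_atLeastAtMost finite_subset)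
qed

lemma no_coll_near:
  fixes x :: "nat \<Rightarrow> real \<Rightarrow> real"
  assumes "0 < (t::real)"
  shows "\<exists>\<delta>>0. \<delta> \<le> t \<and> (\<forall>s. t - \<delta> < s \<longrightarrow> s < t \<longrightarrow> \<not> collision_time N x s)"
proof -
  obtain d where d: "d > 0" "\<forall>s\<in>{\<tau>. collision_time N x \<tau>}. s \<noteq> t \<longrightarrow> d \<le> dist t s"
    using finite_set_avoid[OF coll_finite[of N x], where a=t] by auto
  show ?thesis
    apply (rule exI[of _ "min d t"])
    using d assms by (auto simp: dist_real_def)
qed

lemma avg_mix1:
  fixes X Y a b mu :: real
  assumes "a > 0" "b \<ge> 0" "X \<ge> mu * a" "Y \<le> mu * b"
  shows "X / a \<ge> (X + Y) / (a + b)"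
proof -
  have "X * b \<ge> Y * a"
  proof -
    have "X * b \<ge> mu * a * b" using assms by (simp add: mult_right_mono)
    moreover have "Y * a \<le> mu * b * a" using assms by (simp add: mult_right_mono)
    ultimately show ?thesis by (simp add: algebra_simps)
  qed
  then show ?thesis using assms by (simp add: divide_simps algebra_simps)
qed

lemma avg_mix2:
  fixes X Y a b mu :: real
  assumes "a \<ge> 0" "b > 0" "X \<ge> mu * a" "Y \<le> mu * b"
  shows "(X + Y) / (a + b) \<ge> Y / b"
proof -
  have "X * b \<ge> Y * a"
  proof -
    have "X * b \<ge> mu * a * b" using assms by (simp add: mult_right_mono)
    moreover have "Y * a \<le> mu * b * a" using assms by (simp add: mult_right_mono)
    ultimately show ?thesis by (simp add: algebra_simps)
  qed
  then show ?thesis using assms by (simp add: divide_simps algebra_simps)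
qed

lemma avg_ineq:
  fixes f m :: "nat \<Rightarrow> real"
  assumes "lo \<le> k" "k \<le> hi" "\<And>j. j \<in> {lo..hi} \<Longrightarrow> m j > 0"
    and mono: "\<And>a b. lo \<le> a \<Longrightarrow> a \<le> b \<Longrightarrow> b \<le> hi \<Longrightarrow> f b \<le> f a"
  shows "(\<Sum>j=lo..k. m j * f j)/(\<Sum>j=lo..k. m j) \<ge> (\<Sum>j=lo..hi. m j*f j)/(\<Sum>j=lo..hi. m j)
     \<and> (\<Sum>j=lo..hi. m j*f j)/(\<Sum>j=lo..hi. m j) \<ge> (\<Sum>j=k..hi. m j * f j)/(\<Sum>j=k..hi. m j)"
proof
  have u1: "{lo..hi} = {lo..k} \<union> {Suc k..hi}" using assms by auto
  have s1: "(\<Sum>j=lo..hi. g j) = (\<Sum>j=lo..k. g j) + (\<Sum>j=Suc k..hi. g j)" for g :: "nat \<Rightarrow> real"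
    unfolding u1 by (rule sum.union_disjoint) auto
  show "(\<Sum>j=lo..k. m j * f j)/(\<Sum>j=lo..k. m j) \<ge> (\<Sum>j=lo..hi. m j*f j)/(\<Sum>j=lo..hi. m j)"
    unfolding s1
  proof (rule avg_mix1[where mu = "f k"])
    show "0 < (\<Sum>j=lo..k. m j)" using assms by (intro sum_pos) auto
    show "0 \<le> (\<Sum>j=Suc k..hi. m j)" using assms by (intro sum_nonneg) (auto intro: less_imp_le)
    have "(\<Sum>j=lo..k. f k * m j) \<le> (\<Sum>j=lo..k. m j * f j)"
      using assms by (intro sum_mono) (auto intro!: mult_left_mono)
    then show "f k * (\<Sum>j=lo..k. m j) \<le> (\<Sum>j=lo..k. m j * f j)" by (simp add: sum_distrib_left)
    have "(\<Sum>j=Suc k..hi. m j * f j) \<le> (\<Sum>j=Suc k..hi. f k * m j)"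
      using assms by (intro sum_mono) (auto intro!: mult_left_mono)
    then show "(\<Sum>j=Suc k..hi. m j * f j) \<le> f k * (\<Sum>j=Suc k..hi. m j)" by (simp add: sum_distrib_left)
  qed
  have u2: "{lo..hi} = {lo..<k} \<union> {k..hi}" using assms by auto
  have s2: "(\<Sum>j=lo..hi. g j) = (\<Sum>j=lo..<k. g j) + (\<Sum>j=k..hi. g j)" for g :: "nat \<Rightarrow> real"
    unfolding u2 by (rule sum.union_disjoint) auto
  show "(\<Sum>j=lo..hi. m j*f j)/(\<Sum>j=lo..hi. m j) \<ge> (\<Sum>j=k..hi. m j * f j)/(\<Sum>j=k..hi. m j)"
    unfolding s2
  proof (rule avg_mix2[where mu = "f k"])
    show "0 < (\<Sum>j=k..hi. m j)" using assms by (intro sum_pos) auto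
    show "0 \<le> (\<Sum>j=lo..<k. m j)" using assms by (intro sum_nonneg) (auto intro: less_imp_le)
    have "(\<Sum>j=lo..<k. f k * m j) \<le> (\<Sum>j=lo..<k. m j * f j)"
      using assms by (intro sum_mono) (auto intro!: mult_left_mono)
    then show "f k * (\<Sum>j=lo..<k. m j) \<le> (\<Sum>j=lo..<k. m j * f j)" by (simp add: sum_distrib_left)
    have "(\<Sum>j=k..hi. m j * f j) \<le> (\<Sum>j=k..hi. f k * m j)"
      using assms by (intro sum_mono) (auto intro!: mult_left_mono)
    then show "(\<Sum>j=k..hi. m j * f j) \<le> f k * (\<Sum>j=k..hi. m j)" by (simp add: sum_distrib_left)
  qed
qed

lemma deriv_at:
  assumes dyn: "sticky_CS N m \<phi> x v" and s: "0 < s" and nc: "\<not> collision_time N x s"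
    and j: "j \<in> {1..N}"
  shows "(x j has_real_derivative v j s) (at s)" "isCont (v j) s"
proof -
  have ii: "at s within {0..} = at s" using s by (intro at_within_interior) auto
  have "(x j has_real_derivative v j s) (at s within {0..}) \<and>
        (v j has_real_derivative cs_force N m \<phi> x v j s) (at s within {0..})"
    using dyn s nc j unfolding sticky_CS_def by auto
  then show "(x j has_real_derivative v j s) (at s)" "isCont (v j) s"
    unfolding ii by (auto intro: DERIV_isCont)
qed

lemma left_mono:
  assumes dyn: "sticky_CS N m \<phi> x v" and t: "0 < t"
    and j: "j \<in> {1..N}" and j': "j' \<in> {1..N}" and jj: "j \<le> j'" and eq: "x j t = x j' t"
    and L: "(v j \<longlongrightarrow> L) (at_left t)" and L': "(v j' \<longlongrightarrow> L') (at_left t)"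
  shows "L' \<le> L"
proof (rule ccontr)
  assume "\<not> L' \<le> L"
  then have "((\<lambda>s. v j' s - v j s) \<longlongrightarrow> L' - L) (at_left t)" "L' - L > 0"
    using L L' by (auto intro: tendsto_diff)
  then have ev: "eventually (\<lambda>s. v j' s - v j s > 0) (at_left t)"
    using order_tendstoD(1) by blast
  obtain b where b: "b < t" "\<forall>y. b < y \<longrightarrow> y < t \<longrightarrow> v j' y - v j y > 0"
    using ev unfolding eventually_at_left_field by auto
  obtain \<delta> where d: "\<delta> > 0" "\<delta> \<le> t" "\<forall>s. t - \<delta> < s \<longrightarrow> s < t \<longrightarrow> \<not> collision_time N x s"
    using no_coll_near[OF t, of N x] by auto
  define s where "s = max b (t - \<delta>)"
  have st: "s < t" "0 \<le> s" using b d by (auto simp: s_def)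
  define g where "g y = x j' y - x j y" for y
  have cont: "continuous_on {s..t} g"
  proof -
    have "continuous_on {0..} (x j)" "continuous_on {0..} (x j')"
      using dyn j j' unfolding sticky_CS_def by auto
    then have "continuous_on {s..t} (x j)" "continuous_on {s..t} (x j')"
      using st by (auto elim: continuous_on_subset)
    then show ?thesis unfolding g_def by (intro continuous_intros)
  qed
  have der: "(g has_real_derivative v j' z - v j z) (at z)" if "s < z" "z < t" for z
  proof -
    have "0 < z" "\<not> collision_time N x z" using that st d by (auto simp: s_def)
    then show ?thesis unfolding g_def
      using deriv_at(1)[OF dyn _ _ j] deriv_at(1)[OF dyn _ _ j'] by (auto intro: derivative_intros)
  qed
  obtain l z where z: "s < z" "z < t" "DERIV g z :> l" "g t - g s = (t - s) * l"
    using MVT[OF st(1) cont] der by (meson real_differentiable_def)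
  have "l = v j' z - v j z" using DERIV_unique[OF z(3) der[OF z(1,2)]] .
  moreover have "v j' z - v j z > 0" using b z by (auto simp: s_def)
  moreover have "g t = 0" using eq by (simp add: g_def)
  moreover have "g s \<ge> 0" using dyn st j j' jj unfolding sticky_CS_def g_def by auto
  ultimately have "(t - s) * l \<le> 0" "(t - s) * l > 0" using z st by auto
  then show False by simp
qed

lemma right_eq:
  assumes dyn: "sticky_CS N m \<phi> x v" and t: "0 < t" and nc: "\<not> collision_time N x t"
    and i: "i \<in> {1..N}" and j: "j \<in> cluster N x i t"
  shows "v j t = v i t"
proof -
  have j1: "j \<in> {1..N}" using j unfolding cluster_def by auto
  define g where "g y = x j y - x i y" for y
  have "(g has_real_derivative v j t - v i t) (at t)"
    unfolding g_def using deriv_at(1)[OF dyn t nc j1] deriv_at(1)[OF dyn t nc i]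
    by (auto intro: derivative_intros)
  then have "(g has_real_derivative v j t - v i t) (at t within {t<..})"
    by (rule has_field_derivative_at_within)
  then have lim: "((\<lambda>y. (g y - g t) / (y - t)) \<longlongrightarrow> v j t - v i t) (at_right t)"
    unfolding has_field_derivative_iff by simp
  have g0: "g y = 0" if "t \<le> y" for y
  proof -
    have "cluster N x i t \<subseteq> cluster N x i y" using dyn i t that unfolding sticky_CS_def by auto
    then show ?thesis using j unfolding cluster_def g_def by auto
  qed
  have ev0: "eventually (\<lambda>y. (g y - g t) / (y - t) = 0) (at_right t)"
    by (rule eventually_mono[OF eventually_at_right_less[of t]]) (simp add: g0)
  have "((\<lambda>y. 0) \<longlongrightarrow> v j t - v i t) (at_right t)"
    using Lim_transform_eventually[OF lim ev0] by simp
  then have "v j t - v i t = 0" by (subst (asm) tendsto_const_iff) auto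
  then show ?thesis by simp
qed
lemma cont_lr:
  fixes f :: "real \<Rightarrow> real"
  assumes "isCont f t" shows "(f \<longlongrightarrow> f t) (at_left t)" "(f \<longlongrightarrow> f t) (at_right t)"
  using assms unfolding isCont_def filterlim_at_split by auto
lemma omega_cont:
  assumes H: "hyp_H \<omega> \<phi>" shows "isCont \<omega> x"
proof -
  have int: "integrable lborel \<phi>" and eq: "\<And>a b. a \<le> b \<Longrightarrow> \<omega> b - \<omega> a = set_lebesgue_integral lborel {a..b} \<phi>"
    using H unfolding hyp_H_def by auto
  define a where "a = x - 1"
  define b where "b = x + 1"
  have si: "set_integrable lborel {a..y} \<phi>" for y
    unfolding set_integrable_def using int by (intro integrable_mult_indicator) auto
  have ion: "\<phi> integrable_on {a..b}"
    using integrable_on_lborel[OF int] integrable_on_subinterval by blast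
  have "continuous_on {a..b} (\<lambda>y. \<omega> a + integral {a..y} \<phi>)"
    by (intro continuous_intros indefinite_integral_continuous_1 ion)
  moreover have "\<omega> y = \<omega> a + integral {a..y} \<phi>" if "y \<in> {a..b}" for y
    using eq[of a y] that set_borel_integral_eq_integral(2)[OF si[of y]] by auto
  ultimately have "continuous_on {a..b} \<omega>"
    using continuous_on_cong by (smt (verit))
  then show ?thesis
    by (rule continuous_on_interior) (auto simp: a_def b_def)
qed

theorem lemma2p3:
  fixes N :: nat and m :: "nat \<Rightarrow> real" and \<omega> \<phi> :: "real \<Rightarrow> real"
    and x v :: "nat \<Rightarrow> real \<Rightarrow> real" and i k :: nat and t :: real
  assumes H: "hyp_H \<omega> \<phi>"
    and dyn: "sticky_CS N m \<phi> x v"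
    and i: "i \<in> {1..N}" and t: "0 < t"
    and k: "k \<in> cluster N x i t"
  shows "(let J = cluster N x i t; lo = Min J; hi = Max J;
             P = (\<lambda>j. Lim (at_left t) (psi N m \<omega> x v j))
          in (\<Sum>j=lo..k. m j * P j) / (\<Sum>j=lo..k. m j)
               \<ge> (\<Sum>j\<in>J. m j * P j) / (\<Sum>j\<in>J. m j)
           \<and> (\<Sum>j\<in>J. m j * P j) / (\<Sum>j\<in>J. m j) = Lim (at_right t) (psi N m \<omega> x v i)
           \<and> Lim (at_right t) (psi N m \<omega> x v i)
               \<ge> (\<Sum>j=k..hi. m j * P j) / (\<Sum>j=k..hi. m j))"
proof -
  have mpos: "\<And>j. j \<in> {1..N} \<Longrightarrow> 0 < m j"
    and ord: "\<And>s a b. 0 \<le> s \<Longrightarrow> a \<in> {1..N} \<Longrightarrow> b \<in> {1..N} \<Longrightarrow> a \<le> b \<Longrightarrow> x a s \<le> x b s"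
    and cont: "\<And>j. j \<in> {1..N} \<Longrightarrow> continuous_on {0..} (x j)"
    and coll: "collision_time N x t \<Longrightarrow> j \<in> {1..N} \<Longrightarrow> (\<exists>l. (v j \<longlongrightarrow> l) (at_left t)) \<and>
           (v j \<longlongrightarrow> (\<Sum>j\<in>cluster N x j t. m j * Lim (at_left t) (v j))
                          / (\<Sum>j\<in>cluster N x j t. m j)) (at_right t)" for j
    using dyn unfolding sticky_CS_def by blast+
  define J where "J = cluster N x i t"
  define lo where "lo = Min J"
  define hi where "hi = Max J"
  define P where "P = (\<lambda>j. Lim (at_left t) (psi N m \<omega> x v j))"
  have Jsub: "J \<subseteq> {1..N}" and finJ: "finite J" and iJ: "i \<in> J"
    using i unfolding J_def cluster_def by auto
  have Jeq: "\<And>j. j \<in> J \<Longrightarrow> x j t = x i t" unfolding J_def cluster_def by auto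
  have loJ: "lo \<in> J" and hiJ: "hi \<in> J" using finJ iJ unfolding lo_def hi_def
    by (auto intro: Min_in Max_in)
  have Jint: "J = {lo..hi}"
  proof
    show "J \<subseteq> {lo..hi}" using finJ unfolding lo_def hi_def by auto
    show "{lo..hi} \<subseteq> J"
    proof
      fix j assume j: "j \<in> {lo..hi}"
      have l1: "lo \<in> {1..N}" "hi \<in> {1..N}" using loJ hiJ Jsub by auto
      then have j1: "j \<in> {1..N}" using j by auto
      have "x lo t \<le> x j t" "x j t \<le> x hi t" using ord[of t] t l1 j1 j by auto
      then have "x j t = x i t" using Jeq[OF loJ] Jeq[OF hiJ] by auto
      then show "j \<in> J" using j1 unfolding J_def cluster_def by auto
    qed
  qed
  have xc: "isCont (x l) t" if "l \<in> {1..N}" for l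
    using cont[OF that] t by (intro continuous_on_interior) auto
  have vleft: "\<exists>L. (v j \<longlongrightarrow> L) (at_left t)" if j: "j \<in> {1..N}" for j
  proof (cases "collision_time N x t")
    case True then show ?thesis using coll j by blast
  next
    case False
    then have "isCont (v j) t" using deriv_at(2)[OF dyn t _ j] by auto
    then show ?thesis using cont_lr(1) by blast
  qed
  define Lv where "Lv j = Lim (at_left t) (v j)" for j
  have vL: "(v j \<longlongrightarrow> Lv j) (at_left t)" if "j \<in> {1..N}" for j
    using vleft[OF that] unfolding Lv_def by (metis tendsto_Lim trivial_limit_at_left_real)
  define W where "W = (\<Sum>l=1..N. m l * \<omega> (x i t - x l t))"
  have wc: "isCont (\<lambda>s. \<Sum>l=1..N. m l * \<omega> (x j s - x l s)) t" if j: "j \<in> {1..N}" for j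
  proof -
    have "isCont (\<lambda>s. \<omega> (x j s - x l s)) t" if l: "l \<in> {1..N}" for l
      by (rule isCont_o2[where g=\<omega>, OF _ omega_cont[OF H]]) (intro continuous_intros xc j l)
    then show ?thesis by (intro continuous_intros) auto
  qed
  have psiL: "(psi N m \<omega> x v j \<longlongrightarrow> Lv j + W) (at_left t)" if j: "j \<in> J" for j
  proof -
    have j1: "j \<in> {1..N}" using j Jsub by auto
    have "((\<lambda>s. \<Sum>l=1..N. m l * \<omega> (x j s - x l s)) \<longlongrightarrow> W) (at_left t)"
      using cont_lr(1)[OF wc[OF j1]] Jeq[OF j] unfolding W_def by simp
    then show ?thesis unfolding psi_def[abs_def] using vL[OF j1] by (intro tendsto_add) auto
  qed
  have PJ: "P j = Lv j + W" if "j \<in> J" for j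
    unfolding P_def using psiL[OF that] by (metis tendsto_Lim trivial_limit_at_left_real)
  define A where "A = (\<Sum>j\<in>J. m j * Lv j) / (\<Sum>j\<in>J. m j)"
  have Mpos: "(\<Sum>j\<in>J. m j) > 0" using finJ iJ Jsub mpos by (intro sum_pos2[of _ i]) (auto intro: less_imp_le simp: subset_iff)
  have vR: "(v i \<longlongrightarrow> A) (at_right t)"
  proof (cases "collision_time N x t")
    case True then show ?thesis using coll[OF True i] unfolding A_def J_def Lv_def by blast
  next
    case False
    have ic: "isCont (v j) t" if "j \<in> {1..N}" for j using deriv_at(2)[OF dyn t False that] .
    have "Lv j = v i t" if j: "j \<in> J" for j
    proof -
      have j1: "j \<in> {1..N}" using j Jsub by auto
      have "(v j \<longlongrightarrow> v j t) (at_left t)" using cont_lr(1)[OF ic[OF j1]] .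
      then have "Lv j = v j t" using vL[OF j1] by (metis tendsto_unique trivial_limit_at_left_real)
      then show ?thesis using right_eq[OF dyn t False i] j unfolding J_def by auto
    qed
    then have "A = (\<Sum>j\<in>J. m j * v i t) / (\<Sum>j\<in>J. m j)" unfolding A_def by simp
    also have "\<dots> = v i t" using Mpos by (simp add: sum_distrib_right[symmetric])
    finally show ?thesis using cont_lr(2)[OF ic[OF i]] by simp
  qed
  have psiR: "Lim (at_right t) (psi N m \<omega> x v i) = A + W"
  proof -
    have "((\<lambda>s. \<Sum>l=1..N. m l * \<omega> (x i s - x l s)) \<longlongrightarrow> W) (at_right t)"
      using cont_lr(2)[OF wc[OF i]] unfolding W_def by simp
    then have "(psi N m \<omega> x v i \<longlongrightarrow> A + W) (at_right t)"
      unfolding psi_def[abs_def] using vR by (intro tendsto_add) auto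
    then show ?thesis by (metis tendsto_Lim trivial_limit_at_right_real)
  qed
  have avgJ: "(\<Sum>j\<in>J. m j * P j) / (\<Sum>j\<in>J. m j) = A + W"
  proof -
    have "(\<Sum>j\<in>J. m j * P j) = (\<Sum>j\<in>J. m j * Lv j) + W * (\<Sum>j\<in>J. m j)"
      using PJ by (simp add: algebra_simps sum.distrib sum_distrib_left)
    then show ?thesis unfolding A_def using Mpos by (simp add: field_simps)
  qed
  have mono: "P b \<le> P a" if "lo \<le> a" "a \<le> b" "b \<le> hi" for a b
  proof -
    have ab: "a \<in> J" "b \<in> J" using that Jint by auto
    then have "Lv b \<le> Lv a" using left_mono[OF dyn t _ _ \<open>a \<le> b\<close> _ vL vL] Jsub Jeq by (auto simp: subset_iff)
    then show ?thesis using PJ ab by simp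
  qed
  have kk: "lo \<le> k" "k \<le> hi" using k Jint unfolding J_def by auto
  have mp: "\<And>j. j \<in> {lo..hi} \<Longrightarrow> m j > 0" using Jint Jsub mpos by auto
  have main: "(\<Sum>j=lo..k. m j * P j)/(\<Sum>j=lo..k. m j) \<ge> (\<Sum>j\<in>J. m j*P j)/(\<Sum>j\<in>J. m j)
     \<and> (\<Sum>j\<in>J. m j*P j)/(\<Sum>j\<in>J. m j) \<ge> (\<Sum>j=k..hi. m j * P j)/(\<Sum>j=k..hi. m j)"
    unfolding Jint by (rule avg_ineq[of lo k hi m P, OF kk mp mono])
  show ?thesis
    unfolding Let_def J_def[symmetric] lo_def[symmetric] hi_def[symmetric] P_def[symmetric]
    using main avgJ psiR by auto
qed
end
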